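(* Let $T$ be a normal spanning tree of a connected graph $G$ with $n$ vertices and $m$ edges. For any $\mathbf{0}\ne r=(r_1,\dots,r_{m-n+1})\in\mathbb{I}^{m-n+1}$, let $s=(2\pi-r_1,\dots,2\pi-r_{m-n+1})$ with entries taken modulo $2\pi$ (so $s\in\mathbb{I}^{m-n+1}$). Then $\mathcal{A}_T(r)$ and $\mathcal{A}_T(s)$ are $\mathbb{T}$-cospectral, i.e. all $\mathbb{T}$-gain graphs in $\mathcal{A}_T(r)\cup\mathcal{A}_T(s)$ have adjacency matrices with the same spectrum.
   Context: Graphs are finite, simple and undirected. $\mathbb{T}=\{z\in\mathbb{C}:|z|=1\}$, $\mathbb{I}=[0,2\pi)$, $\mathbf{0}=(0,\dots,0)$. A $\mathbb{T}$-gain on $G$ is a map $\varphi$ from oriented edges to $\mathbb{T}$ with $\varphi(\overrightarrow{e_{ts}})=\varphi(\overrightarrow{e_{st}})^{-1}$; $A(\Phi)$ for $\Phi=(G,\varphi)$ is the Hermitian matrix with $(s,t)$ entry $\varphi(\overrightarrow{e_{st}})$ if $v_s\sim v_t$, else $0$; $\mathcal{T}_G$ is the set of all $\mathbb{T}$-gain graphs on $G$. The gain of a directed cycle is the product of gains of its oriented edges. A rooted spanning tree $T$ with root $v_r$ induces the tree order ($v_x\le v_y$ iff $v_x$ is on the $T$-path from $v_r$ to $v_y$); $T$ is normal if adjacent vertices of $G$ are always comparable. The suitably oriented graph $\overrightarrow{G_T}$ orients each edge $e_{st}$ with $v_s\le v_t$ as $\overrightarrow{e_{st}}$ if $e_{st}\in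 E(T)$ and as $\overrightarrow{e_{ts}}$ otherwise; the $m-n+1$ fundamental cycles of $T$ become directed cycles $\overrightarrow{C_j(T)}$. For $r=(c_1,\dots,c_{m-n+1})\in\mathbb{I}^{m-n+1}$, $\mathcal{A}_T(r)=\{(G,\varphi)\in\mathcal{T}_G:\varphi(\overrightarrow{C_j(T)})=e^{ic_j}\ \forall j\}$. *)

theory Defs
  imports "Jordan_Normal_Form.Char_Poly" "HOL-Computational_Algebra.Fundamental_Theorem_Algebra"
begin

definition gr_simple :: "nat set \<Rightarrow> (nat \<Rightarrow> nat \<Rightarrow> bool) \<Rightarrow> bool" where
  "gr_simple V E \<longleftrightarrow> finite V \<and> (\<forall>u v. E u v \<longrightarrow> u \<in> V \<and> v \<in> V \<and> E v u \<and> u \<noteq> v)"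

definition gr_walk :: "(nat \<Rightarrow> nat \<Rightarrow> bool) \<Rightarrow> nat list \<Rightarrow> bool" where
  "gr_walk E xs \<longleftrightarrow> xs \<noteq> [] \<and> (\<forall>i. Suc i < length xs \<longrightarrow> E (xs ! i) (xs ! Suc i))"

definition gr_path :: "(nat \<Rightarrow> nat \<Rightarrow> bool) \<Rightarrow> nat list \<Rightarrow> bool" where
  "gr_path E xs \<longleftrightarrow> gr_walk E xs \<and> distinct xs"

definition gr_connected :: "nat set \<Rightarrow> (nat \<Rightarrow> nat \<Rightarrow> bool) \<Rightarrow> bool" where
  "gr_connected V E \<longleftrightarrow> V \<noteq> {} \<and>
     (\<forall>u\<in>V. \<forall>v\<in>V. \<exists>p. gr_walk E p \<and> set p \<subseteq> V \<and> hd p = u \<and> last p = v)"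

definition gr_acyclic :: "(nat \<Rightarrow> nat \<Rightarrow> bool) \<Rightarrow> bool" where
  "gr_acyclic E \<longleftrightarrow> \<not> (\<exists>c. gr_path E c \<and> length c \<ge> 3 \<and> E (last c) (hd c))"

definition spanning_tree :: "nat set \<Rightarrow> (nat \<Rightarrow> nat \<Rightarrow> bool) \<Rightarrow> (nat \<Rightarrow> nat \<Rightarrow> bool) \<Rightarrow> bool" where
  "spanning_tree V G T \<longleftrightarrow> gr_simple V T \<and> (\<forall>u v. T u v \<longrightarrow> G u v) \<and>
     gr_connected V T \<and> gr_acyclic T"

definition tree_le :: "(nat \<Rightarrow> nat \<Rightarrow> bool) \<Rightarrow> nat \<Rightarrow> nat \<Rightarrow> nat \<Rightarrow> bool" where
  "tree_le T rt x y \<longleftrightarrow> (\<exists>p. gr_path T p \<and> hd p = rt \<and> last p = y \<and> x \<in> set p)"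

definition normal_spanning_tree ::
  "nat set \<Rightarrow> (nat \<Rightarrow> nat \<Rightarrow> bool) \<Rightarrow> (nat \<Rightarrow> nat \<Rightarrow> bool) \<Rightarrow> nat \<Rightarrow> bool" where
  "normal_spanning_tree V G T rt \<longleftrightarrow> spanning_tree V G T \<and> rt \<in> V \<and>
     (\<forall>u v. G u v \<longrightarrow> tree_le T rt u v \<or> tree_le T rt v u)"

definition tree_path :: "(nat \<Rightarrow> nat \<Rightarrow> bool) \<Rightarrow> nat \<Rightarrow> nat \<Rightarrow> nat list" where
  "tree_path T s t = (THE p. gr_path T p \<and> hd p = s \<and> last p = t)"

text \<open>Non-tree edges e_st, recorded as the pair (s,t) with v_s \<le> v_t in the tree order;
  each indexes one fundamental cycle.\<close>
definition nontree_edges ::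
  "nat set \<Rightarrow> (nat \<Rightarrow> nat \<Rightarrow> bool) \<Rightarrow> (nat \<Rightarrow> nat \<Rightarrow> bool) \<Rightarrow> nat \<Rightarrow> (nat \<times> nat) set" where
  "nontree_edges V G T rt = {(s,t). s \<in> V \<and> t \<in> V \<and> G s t \<and> \<not> T s t \<and> tree_le T rt s t}"

definition gain_graph :: "(nat \<Rightarrow> nat \<Rightarrow> bool) \<Rightarrow> (nat \<Rightarrow> nat \<Rightarrow> complex) \<Rightarrow> bool" where
  "gain_graph G \<phi> \<longleftrightarrow> (\<forall>u v. G u v \<longrightarrow> cmod (\<phi> u v) = 1 \<and> \<phi> v u = inverse (\<phi> u v))"

text \<open>Gain of the directed fundamental cycle of the non-tree edge (s,t), s \<le> t, in the suitably
  oriented graph: tree path s \<rightarrow> ... \<rightarrow> t oriented away from the root, then the edge t \<rightarrow> s.\<close>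
definition fund_cycle_gain ::
  "(nat \<Rightarrow> nat \<Rightarrow> bool) \<Rightarrow> (nat \<Rightarrow> nat \<Rightarrow> complex) \<Rightarrow> nat \<times> nat \<Rightarrow> complex" where
  "fund_cycle_gain T \<phi> e = (case e of (s,t) \<Rightarrow>
     (let p = tree_path T s t in (\<Prod>i < length p - 1. \<phi> (p ! i) (p ! Suc i)) * \<phi> t s))"

definition gain_adj_matrix :: "nat \<Rightarrow> (nat \<Rightarrow> nat \<Rightarrow> bool) \<Rightarrow> (nat \<Rightarrow> nat \<Rightarrow> complex) \<Rightarrow> complex mat" where
  "gain_adj_matrix n G \<phi> = mat n n (\<lambda>(s,t). if G s t then \<phi> s t else 0)"

text \<open>A_T(r), the angles r indexed by the non-tree edges (fundamental cycles).\<close>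
definition A_T ::
  "nat \<Rightarrow> (nat \<Rightarrow> nat \<Rightarrow> bool) \<Rightarrow> (nat \<Rightarrow> nat \<Rightarrow> bool) \<Rightarrow> nat \<Rightarrow> (nat \<times> nat \<Rightarrow> real)
     \<Rightarrow> (nat \<Rightarrow> nat \<Rightarrow> complex) set" where
  "A_T n G T rt r = {\<phi>. gain_graph G \<phi> \<and>
     (\<forall>e \<in> nontree_edges {0..<n} G T rt. fund_cycle_gain T \<phi> e = exp (\<i> * complex_of_real (r e)))}"

text \<open>(2\<pi> - x) mod 2\<pi> for x \<in> [0,2\<pi>).\<close>
definition neg_angle :: "real \<Rightarrow> real" where
  "neg_angle x = (if x = 0 then 0 else 2 * pi - x)"

definition mat_spectrum :: "complex mat \<Rightarrow> complex multiset" where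
  "mat_spectrum A = proots (char_poly A)"

end

theory Submission
  imports Defs
begin

fun wk :: "(nat \<Rightarrow> nat \<Rightarrow> bool) \<Rightarrow> nat list \<Rightarrow> bool" where
  "wk E [] = True" | "wk E [a] = True" | "wk E (a # b # w) = (E a b \<and> wk E (b # w))"

lemma gr_walk_wk: "gr_walk E xs \<longleftrightarrow> xs \<noteq> [] \<and> wk E xs"
proof (induction E xs rule: wk.induct)
  case (3 E a b w)
  have "(\<forall>i. Suc i < length (a # b # w) \<longrightarrow> E ((a # b # w) ! i) ((a # b # w) ! Suc i)) \<longleftrightarrow>
        E a b \<and> (\<forall>i. Suc i < length (b # w) \<longrightarrow> E ((b # w) ! i) ((b # w) ! Suc i))"
    (is "?L \<longleftrightarrow> ?R")
  proof
    assume ?L then show ?R by (metis Suc_less_eq length_Cons nth_Cons_0 nth_Cons_Suc zero_less_Suc)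
  next
    assume R: ?R
    show ?L
    proof (intro allI impI)
      fix i assume "Suc i < length (a # b # w)"
      then show "E ((a # b # w) ! i) ((a # b # w) ! Suc i)" using R by (cases i) auto
    qed
  qed
  then show ?case using 3 by (simp add: gr_walk_def)
qed (auto simp: gr_walk_def)

lemma wk_append: "wk E (xs @ ys) \<longleftrightarrow> wk E xs \<and> wk E ys \<and> (xs \<noteq> [] \<and> ys \<noteq> [] \<longrightarrow> E (last xs) (hd ys))"
  by (induction E xs rule: wk.induct; cases ys) auto

lemma wk_rev: "(\<And>u v. E u v \<Longrightarrow> E v u) \<Longrightarrow> wk E xs \<Longrightarrow> wk E (rev xs)"
  by (induction E xs rule: wk.induct) (auto simp: wk_append)

lemma wk_take: "wk E xs \<Longrightarrow> wk E (take k xs)"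
  by (metis append_take_drop_id wk_append)

lemma wk_drop: "wk E xs \<Longrightarrow> wk E (drop k xs)"
  by (metis append_take_drop_id wk_append)


lemma wk_nth: "wk E xs \<Longrightarrow> Suc i < length xs \<Longrightarrow> E (xs ! i) (xs ! Suc i)"
  by (metis gr_walk_def gr_walk_wk list.size(3) not_less_zero)

lemma wk_Cons: "xs \<noteq> [] \<Longrightarrow> wk E (a # xs) \<longleftrightarrow> E a (hd xs) \<and> wk E xs"
  by (cases xs) auto

lemma last_take_nth_conv: "0 < n \<Longrightarrow> n \<le> length xs \<Longrightarrow> last (take n xs) = xs ! (n - 1)"
  by (subst last_conv_nth) (auto simp: min_def)

lemma cycle_contra:
  assumes sym: "\<And>u v. E u v \<Longrightarrow> E v u" and acyc: "gr_acyclic E"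
    and wp: "wk E p" and wq: "wk E q" and dp: "distinct p" and dq: "distinct q"
    and pne: "p \<noteq> []" and qne: "q \<noteq> []" and sp: "s \<notin> set p" and sq: "s \<notin> set q"
    and Ep: "E s (hd p)" and Eq: "E s (hd q)" and hne: "hd p \<noteq> hd q" and lst: "last p = last q"
  shows False
proof -
  define P where "P j \<longleftrightarrow> j < length q \<and> q ! j \<in> set p" for j
  have "P (length q - 1)" using qne lst pne unfolding P_def
    by (metis diff_less last_conv_nth last_in_set length_greater_0_conv less_one)
  define j where "j = (LEAST j. P j)"
  have Pj: "P j" unfolding j_def by (rule LeastI) fact
  have mn: "k < j \<Longrightarrow> q ! k \<notin> set p" for k
  proof
    assume k: "k < j" "q ! k \<in> set p"
    have "k < length q" using k Pj P_def by auto
    then have "P k" using k P_def by auto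
    then show False using not_less_Least[of k P] k unfolding j_def by blast
  qed
  from Pj obtain i where i: "i < length p" "p ! i = q ! j" unfolding P_def by (metis in_set_conv_nth)
  have jl: "j < length q" using Pj P_def by auto
  define c1 where "c1 = s # take (Suc i) p"
  define c2 where "c2 = rev (take j q)"
  define c where "c = c1 @ c2"
  have d1: "distinct c1" unfolding c1_def using dp sp by (auto dest: in_set_takeD)
  have d2: "distinct c2" unfolding c2_def using dq by auto
  have disj: "set c1 \<inter> set c2 = {}"
  proof -
    have "x \<notin> set c1" if "x \<in> set c2" for x
    proof -
      from that obtain k where k: "k < j" "x = q ! k" unfolding c2_def
        using jl by (auto simp: in_set_conv_nth)
      then have "x \<notin> set p" using mn by auto
      moreover have "x \<noteq> s" using sq k jl by auto
      ultimately show ?thesis unfolding c1_def by (auto dest: in_set_takeD)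
    qed
    then show ?thesis by auto
  qed
  have dc: "distinct c" unfolding c_def using d1 d2 disj by auto
  have w1: "wk E c1"
  proof -
    have "wk E (s # p)" using wp pne Ep by (simp add: wk_Cons)
    then have "wk E (take (Suc (Suc i)) (s # p))" by (rule wk_take)
    then show ?thesis unfolding c1_def by simp
  qed
  have w2: "wk E c2" unfolding c2_def using wk_rev[OF _ wk_take[OF wq]] sym by blast
  have l1: "last c1 = q ! j" unfolding c1_def using i pne by (simp add: last_take_nth_conv del: take_Suc)
  have hq: "hd q = q ! 0" using qne by (simp add: hd_conv_nth)
  have junc: "c2 \<noteq> [] \<longrightarrow> E (last c1) (hd c2)"
  proof
    assume "c2 \<noteq> []"
    then have j0: "j > 0" unfolding c2_def by auto
    have "hd c2 = q ! (j - 1)" unfolding c2_def using j0 jl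
      by (simp add: hd_rev last_take_nth_conv)
    moreover have "E (q ! (j - 1)) (q ! j)" using wk_nth[OF wq, of "j - 1"] j0 jl by simp
    ultimately show "E (last c1) (hd c2)" using l1 sym by simp
  qed
  have wc: "wk E c" unfolding c_def using w1 w2 junc by (simp add: wk_append)
  have lc: "last c = hd q"
  proof (cases "j = 0")
    case True then show ?thesis unfolding c_def c2_def using l1 hq by simp
  next
    case False then show ?thesis unfolding c_def c2_def using hq qne
      by (simp add: last_rev hd_take)
  qed
  have len: "length c \<ge> 3"
  proof (cases "j = 0")
    case True
    then have "i \<noteq> 0" using i hne hq pne by (metis hd_conv_nth)
    then show ?thesis unfolding c_def c1_def c2_def using i by simp
  next
    case False then show ?thesis unfolding c_def c1_def c2_def using i jl by simp
  qed
  have "gr_path E c" unfolding gr_path_def gr_walk_wk c_def c1_def using wc dc c_def c1_def by simp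
  moreover have "E (last c) (hd c)" using lc sym Eq unfolding c_def c1_def by simp
  ultimately show False using acyc len unfolding gr_acyclic_def by blast
qed

lemma path_unique:
  assumes sym: "\<And>u v. E u v \<Longrightarrow> E v u" and acyc: "gr_acyclic E"
  shows "gr_path E p \<Longrightarrow> gr_path E q \<Longrightarrow> hd p = hd q \<Longrightarrow> last p = last q \<Longrightarrow> p = q"
proof (induction p arbitrary: q)
  case Nil then show ?case by (simp add: gr_path_def gr_walk_def)
next
  case (Cons s p')
  from Cons.prems obtain q' where q: "q = s # q'"
    by (metis gr_path_def gr_walk_def list.collapse list.sel(1))
  have dp: "distinct (s # p')" and dq: "distinct (s # q')" and wp: "wk E (s # p')" and wq: "wk E (s # q')"
    using Cons.prems q by (auto simp: gr_path_def gr_walk_wk)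
  show ?case
  proof (cases "p' = []")
    case True
    then have "last q = s" using Cons.prems by simp
    then have "q' = []" using dq q by (metis distinct.simps(2) last.simps last_in_set)
    then show ?thesis using True q by simp
  next
    case pn: False
    show ?thesis
    proof (cases "q' = []")
      case True
      then have "last (s # p') = s" using Cons.prems q by simp
      then have False using dp pn by (metis distinct.simps(2) last.simps last_in_set)
      then show ?thesis ..
    next
      case qn: False
      have lst: "last p' = last q'" using Cons.prems q pn qn by simp
      have wp': "wk E p'" and wq': "wk E q'" and Ep: "E s (hd p')" and Eq: "E s (hd q')"
        using wp wq pn qn by (auto simp: wk_Cons)
      show ?thesis
      proof (cases "hd p' = hd q'")
        case True
        have "p' = q'" using Cons.IH[of q'] wp' wq' dp dq pn qn True lst
          by (simp add: gr_path_def gr_walk_wk)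
        then show ?thesis using q by simp
      next
        case False
        have False using cycle_contra[OF sym acyc wp' wq' _ _ pn qn _ _ Ep Eq False lst] dp dq
          by auto
        then show ?thesis ..
      qed
    qed
  qed
qed


lemma unit_cnj: "cmod u = 1 \<Longrightarrow> u * cnj u = 1"
  by (metis complex_norm_square mult.left_neutral of_real_1 power_one)

lemma unit_inv: "cmod u = 1 \<Longrightarrow> inverse u = cnj u"
  by (metis divide_conv_cnj inverse_eq_divide mult_1)

definition pw :: "(nat \<Rightarrow> nat \<Rightarrow> complex) \<Rightarrow> nat list \<Rightarrow> complex" where
  "pw f p = (\<Prod>i < length p - 1. f (p ! i) (p ! Suc i))"

lemma pw_single[simp]: "pw f [a] = 1" "pw f [] = 1" by (simp_all add: pw_def)

lemma pw_Cons2[simp]: "pw f (a # b # w) = f a b * pw f (b # w)"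
  unfolding pw_def by (simp add: prod.lessThan_Suc_shift del: prod.lessThan_Suc)

lemma pw_snoc: "p \<noteq> [] \<Longrightarrow> pw f (p @ [v]) = pw f p * f (last p) v"
proof (induction p)
  case (Cons a p) then show ?case by (cases p) auto
qed simp

lemma fcg_pw: "fund_cycle_gain T \<phi> (s, t) = pw \<phi> (tree_path T s t) * \<phi> t s"
  by (simp add: fund_cycle_gain_def pw_def Let_def)

lemma pw_unit: "(\<And>u v. E u v \<Longrightarrow> cmod (f u v) = 1) \<Longrightarrow> wk E p \<Longrightarrow> cmod (pw f p) = 1"
  by (induction E p rule: wk.induct) (auto simp: norm_mult)

lemma wk_mono: "(\<And>u v. E u v \<Longrightarrow> F u v) \<Longrightarrow> wk E p \<Longrightarrow> wk F p"
  by (induction E p rule: wk.induct) auto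

lemma tree_path_eq:
  assumes sym: "\<And>u v. T u v \<Longrightarrow> T v u" and acyc: "gr_acyclic T"
    and p: "gr_path T p" "hd p = s" "last p = t"
  shows "tree_path T s t = p"
  unfolding tree_path_def
  by (rule the_equality) (use p path_unique[OF sym acyc] in auto)

lemma path_prefix:
  assumes "gr_path T p" "x \<in> set p"
  shows "\<exists>q. gr_path T q \<and> hd q = hd p \<and> last q = x"
proof -
  obtain k where k: "k < length p" "p ! k = x" using assms(2) by (metis in_set_conv_nth)
  have "gr_path T (take (Suc k) p)" using assms(1) by (auto simp: gr_path_def gr_walk_wk wk_take)
  moreover have "hd (take (Suc k) p) = hd p" using k by (cases p) auto
  moreover have "last (take (Suc k) p) = x" using k by (simp add: last_take_nth_conv del: take_Suc)
  ultimately show ?thesis by blast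
qed

lemma path_suffix:
  assumes "gr_path T p" "x \<in> set p"
  shows "\<exists>q. gr_path T q \<and> hd q = x \<and> last q = last p"
proof -
  obtain k where k: "k < length p" "p ! k = x" using assms(2) by (metis in_set_conv_nth)
  have "gr_path T (drop k p)" using assms(1) k by (auto simp: gr_path_def gr_walk_wk wk_drop)
  moreover have "hd (drop k p) = x" using k by (simp add: hd_drop_conv_nth)
  moreover have "last (drop k p) = last p" using k by simp
  ultimately show ?thesis by blast
qed

lemma tree_le_paths:
  assumes "tree_le T rt x y"
  shows "\<exists>p. gr_path T p \<and> hd p = rt \<and> last p = x" "\<exists>p. gr_path T p \<and> hd p = rt \<and> last p = y"
  using assms path_prefix unfolding tree_le_def by blast+


lemma flip_edge:
  assumes g1: "gain_graph G \<phi>1" and g2: "gain_graph G \<phi>2" and e: "G u v"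
    and zu: "cmod zu = 1" and zv: "cmod zv = 1"
    and h: "\<phi>1 v u * zv = \<phi>2 v u * zu"
  shows "\<phi>1 u v * zu = \<phi>2 u v * zv"
proof -
  have a: "cmod (\<phi>1 u v) = 1" "\<phi>1 v u = inverse (\<phi>1 u v)" using g1 e unfolding gain_graph_def by auto
  have b: "cmod (\<phi>2 u v) = 1" "\<phi>2 v u = inverse (\<phi>2 u v)" using g2 e unfolding gain_graph_def by auto
  have nz: "\<phi>1 u v \<noteq> 0" "\<phi>2 u v \<noteq> 0" using a b by auto
  from h have "zv / \<phi>1 u v = zu / \<phi>2 u v" using a b by (simp add: field_simps)
  then show ?thesis using nz by (simp add: field_simps)
qed

lemma switching_edges:
  assumes gs: "gr_simple {0..<n} G" and nst: "normal_spanning_tree {0..<n} G T rt"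
    and g1: "gain_graph G \<phi>1" and g2: "gain_graph G \<phi>2"
    and eq: "\<forall>e \<in> nontree_edges {0..<n} G T rt. fund_cycle_gain T \<phi>1 e = fund_cycle_gain T \<phi>2 e"
  shows "\<exists>\<zeta>. (\<forall>v. cmod (\<zeta> v) = 1) \<and> (\<forall>u v. G u v \<longrightarrow> \<phi>1 u v * \<zeta> u = \<phi>2 u v * \<zeta> v)"
proof -
  have st: "spanning_tree {0..<n} G T" and rtV: "rt \<in> {0..<n}"
    and nrm: "\<And>u v. G u v \<Longrightarrow> tree_le T rt u v \<or> tree_le T rt v u"
    using nst unfolding normal_spanning_tree_def by auto
  have symT: "\<And>u v. T u v \<Longrightarrow> T v u" and TG: "\<And>u v. T u v \<Longrightarrow> G u v" and acyc: "gr_acyclic T"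
    and Tirr: "\<And>u v. T u v \<Longrightarrow> u \<noteq> v"
    using st unfolding spanning_tree_def gr_simple_def by auto
  have symG: "\<And>u v. G u v \<Longrightarrow> G v u" and GV: "\<And>u v. G u v \<Longrightarrow> u < n \<and> v < n"
    using gs unfolding gr_simple_def by auto
  have u1: "\<And>u v. G u v \<Longrightarrow> cmod (\<phi>1 u v) = 1" "\<And>u v. G u v \<Longrightarrow> cmod (\<phi>2 u v) = 1"
    using g1 g2 unfolding gain_graph_def by auto
  define \<rho> where "\<rho> u v = \<phi>1 u v * cnj (\<phi>2 u v)" for u v
  have u\<rho>: "\<And>u v. G u v \<Longrightarrow> cmod (\<rho> u v) = 1" using u1 by (simp add: \<rho>_def norm_mult)
  define \<zeta> where "\<zeta> v = (let z = pw \<rho> (tree_path T rt v) in if cmod z = 1 then z else 1)" for v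
  have z1: "cmod (\<zeta> v) = 1" for v by (simp add: \<zeta>_def Let_def)
  have zp: "\<zeta> v = pw \<rho> p" if "gr_path T p" "hd p = rt" "last p = v" for p v
  proof -
    have tp: "tree_path T rt v = p" using tree_path_eq[OF symT acyc that] by blast
    have "wk G p" using that(1) wk_mono[of T G p] TG by (auto simp: gr_path_def gr_walk_wk)
    then have "cmod (pw \<rho> p) = 1" using pw_unit[of G \<rho>] u\<rho> by blast
    then show ?thesis by (simp add: \<zeta>_def tp)
  qed
  have rtp: "\<exists>p. gr_path T p \<and> hd p = rt \<and> last p = u" if "G u v \<or> G v u" for u v
  proof -
    have "G u v" using that symG by blast
    then have "tree_le T rt u v \<or> tree_le T rt v u" using nrm by blast
    then show ?thesis using tree_le_paths by blast
  qed
  have tedge: "\<phi>1 u v * \<zeta> u = \<phi>2 u v * \<zeta> v" if tuv: "T u v" for u v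
  proof -
    have Guv: "G u v" using TG tuv by blast
    obtain pu where pu: "gr_path T pu" "hd pu = rt" "last pu = u" using rtp Guv by blast
    obtain pv where pv: "gr_path T pv" "hd pv = rt" "last pv = v" using rtp Guv by blast
    have nu: "pu \<noteq> []" "pv \<noteq> []" using pu pv by (auto simp: gr_path_def gr_walk_def)
    have c2: "cmod (\<phi>2 u v) = 1" "cmod (\<phi>1 u v) = 1" using u1 Guv by auto
    show ?thesis
    proof (cases "v \<in> set pu")
      case False
      have "gr_path T (pu @ [v])" using pu False tuv nu
        by (auto simp: gr_path_def gr_walk_wk wk_append)
      then have "\<zeta> v = pw \<rho> (pu @ [v])" using zp pu nu by simp
      also have "\<dots> = \<zeta> u * \<rho> u v" using pw_snoc[OF nu(1)] zp[OF pu] pu by simp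
      finally show ?thesis using unit_cnj[OF c2(1)] by (simp add: \<rho>_def algebra_simps)
    next
      case vin: True
      show ?thesis
      proof (cases "u \<in> set pv")
        case False
        have "gr_path T (pv @ [u])" using pv False symT[OF tuv] nu
          by (auto simp: gr_path_def gr_walk_wk wk_append)
        then have "\<zeta> u = pw \<rho> (pv @ [u])" using zp pv nu by simp
        also have "\<dots> = \<zeta> v * \<rho> v u" using pw_snoc[OF nu(2)] zp[OF pv] pv by simp
        finally have "\<zeta> u = \<zeta> v * \<rho> v u" .
        then have "\<phi>1 v u * \<zeta> v = \<phi>2 v u * \<zeta> u"
          using unit_cnj[OF u1(2)[OF symG[OF Guv]]] by (simp add: \<rho>_def algebra_simps)
        then show ?thesis using flip_edge[OF g1 g2 Guv z1 z1] by blast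
      next
        case uin: True
        obtain k where k: "k < length pu" "pu ! k = v" using vin by (metis in_set_conv_nth)
        have kl: "k < length pu - 1"
        proof (rule ccontr)
          assume "\<not> ?thesis"
          then have "k = length pu - 1" using k by simp
          then have "v = u" using k pu nu by (simp add: last_conv_nth)
          then show False using Tirr tuv by blast
        qed
        have "gr_path T (take (Suc k) pu)" using pu by (auto simp: gr_path_def gr_walk_wk wk_take)
        moreover have "hd (take (Suc k) pu) = rt" using pu nu by (cases pu) auto
        moreover have "last (take (Suc k) pu) = v" using k by (simp add: last_take_nth_conv del: take_Suc)
        ultimately have "pv = take (Suc k) pu" using path_unique[OF symT acyc] pv by metis
        then have "u \<in> set (take (Suc k) pu)" using uin by simp
        moreover have "u \<in> set (drop (Suc k) pu)"
        proof -
          have "u = pu ! (length pu - 1)" using pu nu by (simp add: last_conv_nth)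
          moreover have "length pu - 1 - Suc k < length (drop (Suc k) pu)" using kl by simp
          moreover have "drop (Suc k) pu ! (length pu - 1 - Suc k) = pu ! (length pu - 1)"
          proof -
            have "Suc k + (length pu - 1 - Suc k) = length pu - 1" using kl by arith
            then show ?thesis using kl by (simp only: nth_drop)
          qed
          ultimately show ?thesis by (metis nth_mem)
        qed
        moreover have "distinct pu" using pu by (simp add: gr_path_def)
        ultimately have False using distinct_append[of "take (Suc k) pu" "drop (Suc k) pu"] by auto
        then show ?thesis ..
      qed
    qed
  qed
  have tel: "wk T p \<Longrightarrow> p \<noteq> [] \<Longrightarrow> pw \<phi>1 p * \<zeta> (hd p) = pw \<phi>2 p * \<zeta> (last p)" for p
  proof (induction p rule: induct_list012)
    case (3 a b w)
    have ab: "T a b" and w: "wk T (b # w)" using 3(3) by auto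
    have "pw \<phi>1 (a # b # w) * \<zeta> a = pw \<phi>1 (b # w) * (\<phi>1 a b * \<zeta> a)" by simp
    also have "\<dots> = \<phi>2 a b * (pw \<phi>1 (b # w) * \<zeta> b)" using tedge[OF ab] by simp
    also have "\<dots> = \<phi>2 a b * (pw \<phi>2 (b # w) * \<zeta> (last (b # w)))" using 3(2) w by simp
    finally show ?case by simp
  qed auto
  have ntedge: "\<phi>1 t s * \<zeta> t = \<phi>2 t s * \<zeta> s" if e: "(s, t) \<in> nontree_edges {0..<n} G T rt" for s t
  proof -
    have tl: "tree_le T rt s t" using e unfolding nontree_edges_def by auto
    then obtain p where p: "gr_path T p" "hd p = rt" "last p = t" "s \<in> set p"
      unfolding tree_le_def by blast
    obtain q where q: "gr_path T q" "hd q = s" "last q = t" using path_suffix[OF p(1) p(4)] p(3) by blast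
    have tp: "tree_path T s t = q" using tree_path_eq[OF symT acyc q] .
    have wq: "wk T q" "q \<noteq> []" using q(1) by (auto simp: gr_path_def gr_walk_wk)
    have "wk G q" using wq wk_mono[of T G q] TG by blast
    then have b1: "cmod (pw \<phi>2 q) = 1" using pw_unit[of G \<phi>2] u1 by blast
    have f: "pw \<phi>1 q * \<phi>1 t s = pw \<phi>2 q * \<phi>2 t s"
      using bspec[OF eq e] by (simp only: fcg_pw tp)
    have tq: "pw \<phi>1 q * \<zeta> s = pw \<phi>2 q * \<zeta> t" using tel[OF wq] q by simp
    have "pw \<phi>2 q * (\<phi>1 t s * \<zeta> t) = pw \<phi>2 q * (\<phi>2 t s * \<zeta> s)"
    proof -
      have "pw \<phi>2 q * (\<phi>1 t s * \<zeta> t) = \<phi>1 t s * (pw \<phi>2 q * \<zeta> t)" by (simp add: algebra_simps)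
      also have "\<dots> = \<phi>1 t s * (pw \<phi>1 q * \<zeta> s)" using tq by simp
      also have "\<dots> = (pw \<phi>1 q * \<phi>1 t s) * \<zeta> s" by (simp add: algebra_simps)
      also have "\<dots> = pw \<phi>2 q * (\<phi>2 t s * \<zeta> s)" using f by (simp add: algebra_simps)
      finally show ?thesis .
    qed
    moreover have "pw \<phi>2 q \<noteq> 0" using b1 by auto
    ultimately show ?thesis by simp
  qed
  have "\<phi>1 u v * \<zeta> u = \<phi>2 u v * \<zeta> v" if G: "G u v" for u v
  proof (cases "T u v")
    case True then show ?thesis using tedge by blast
  next
    case nT: False
    have uv: "u \<in> {0..<n}" "v \<in> {0..<n}" using GV G by auto
    show ?thesis
    proof (cases "tree_le T rt u v")
      case True
      then have "(u, v) \<in> nontree_edges {0..<n} G T rt" using uv G nT unfolding nontree_edges_def by auto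
      then have "\<phi>1 v u * \<zeta> v = \<phi>2 v u * \<zeta> u" using ntedge by blast
      then show ?thesis using flip_edge[OF g1 g2 G z1 z1] by blast
    next
      case False
      then have "tree_le T rt v u" using nrm G by blast
      moreover have "\<not> T v u" using nT symT by blast
      ultimately have "(v, u) \<in> nontree_edges {0..<n} G T rt" using uv G symG unfolding nontree_edges_def by auto
      then show ?thesis using ntedge by blast
    qed
  qed
  then show ?thesis using z1 by blast
qed


lemma diag_left:
  assumes "A \<in> carrier_mat n m" "i < n" "j < m"
  shows "(mat n n (\<lambda>(i, j). if i = j then d i else 0) * A) $$ (i, j) = d i * A $$ (i, j)"
proof -
  have "(mat n n (\<lambda>(i, j). if i = j then d i else 0) * A) $$ (i, j) =
        (\<Sum>k\<in>{0..<n}. (if i = k then d i else 0) * A $$ (k, j))"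
    using assms by (simp add: scalar_prod_def)
  also have "\<dots> = (\<Sum>k\<in>{0..<n}. if k = i then d i * A $$ (i, j) else 0)"
    by (rule sum.cong) auto
  also have "\<dots> = d i * A $$ (i, j)" using assms by simp
  finally show ?thesis .
qed

lemma diag_right:
  assumes "A \<in> carrier_mat m n" "i < m" "j < n"
  shows "(A * mat n n (\<lambda>(i, j). if i = j then d i else 0)) $$ (i, j) = A $$ (i, j) * d j"
proof -
  have "(A * mat n n (\<lambda>(i, j). if i = j then d i else 0)) $$ (i, j) =
        (\<Sum>k\<in>{0..<n}. A $$ (i, k) * (if k = j then d k else 0))"
    using assms by (simp add: scalar_prod_def)
  also have "\<dots> = (\<Sum>k\<in>{0..<n}. if k = j then A $$ (i, j) * d j else 0)"
    by (rule sum.cong) auto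
  also have "\<dots> = A $$ (i, j) * d j" using assms by simp
  finally show ?thesis .
qed

lemma switch_spec:
  assumes z1: "\<And>v. cmod (\<zeta> v) = 1"
    and e: "\<And>u v. G u v \<Longrightarrow> \<phi>1 u v * \<zeta> u = \<phi>2 u v * \<zeta> v"
  shows "mat_spectrum (gain_adj_matrix n G \<phi>1) = mat_spectrum (gain_adj_matrix n G \<phi>2)"
proof -
  define P where "P = mat n n (\<lambda>(i, j). if i = j then cnj (\<zeta> i) else 0)"
  define Q where "Q = mat n n (\<lambda>(i, j). if i = j then \<zeta> i else 0)"
  let ?A1 = "gain_adj_matrix n G \<phi>1" and ?A2 = "gain_adj_matrix n G \<phi>2"
  have c: "?A1 \<in> carrier_mat n n" "?A2 \<in> carrier_mat n n" "P \<in> carrier_mat n n" "Q \<in> carrier_mat n n"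
    by (auto simp: gain_adj_matrix_def P_def Q_def)
  have zc: "\<zeta> i * cnj (\<zeta> i) = 1" "cnj (\<zeta> i) * \<zeta> i = 1" for i
    using unit_cnj[OF z1[of i]] by (auto simp: mult.commute)
  have PQ: "P * Q = 1\<^sub>m n"
  proof (rule eq_matI)
    fix i j assume ij: "i < dim_row (1\<^sub>m n :: complex mat)" "j < dim_col (1\<^sub>m n :: complex mat)"
    then have "(P * Q) $$ (i, j) = cnj (\<zeta> i) * Q $$ (i, j)"
      unfolding P_def by (intro diag_left[OF c(4)]) auto
    then show "(P * Q) $$ (i, j) = 1\<^sub>m n $$ (i, j)" using ij zc by (auto simp: Q_def)
  qed (auto simp: P_def Q_def)
  have QP: "Q * P = 1\<^sub>m n"
  proof (rule eq_matI)
    fix i j assume ij: "i < dim_row (1\<^sub>m n :: complex mat)" "j < dim_col (1\<^sub>m n :: complex mat)"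
    then have "(Q * P) $$ (i, j) = \<zeta> i * P $$ (i, j)"
      unfolding Q_def by (intro diag_left[OF c(3)]) auto
    then show "(Q * P) $$ (i, j) = 1\<^sub>m n $$ (i, j)" using ij zc by (auto simp: P_def)
  qed (auto simp: P_def Q_def)
  have eqA: "?A1 = P * ?A2 * Q"
  proof (rule eq_matI)
    fix i j assume ij: "i < dim_row (P * ?A2 * Q)" "j < dim_col (P * ?A2 * Q)"
    then have ij': "i < n" "j < n" using c by auto
    have pa: "P * ?A2 \<in> carrier_mat n n" using c by auto
    have "(P * ?A2 * Q) $$ (i, j) = cnj (\<zeta> i) * ?A2 $$ (i, j) * \<zeta> j"
      unfolding Q_def using diag_right[OF pa ij', of \<zeta>] diag_left[OF c(2) ij', of "\<lambda>i. cnj (\<zeta> i)"]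
      unfolding P_def by simp
    also have "\<dots> = ?A1 $$ (i, j)"
    proof (cases "G i j")
      case True
      have "cnj (\<zeta> i) * \<phi>2 i j * \<zeta> j = cnj (\<zeta> i) * (\<phi>1 i j * \<zeta> i)" using e[OF True] by simp
      also have "\<dots> = \<phi>1 i j" using zc(2)[of i] by (simp add: algebra_simps)
      finally show ?thesis using True ij' by (simp add: gain_adj_matrix_def)
    qed (use ij' in \<open>simp add: gain_adj_matrix_def\<close>)
    finally show "?A1 $$ (i, j) = (P * ?A2 * Q) $$ (i, j)" by simp
  qed (use c in auto)
  have "similar_mat ?A1 ?A2"
    unfolding similar_mat_def similar_mat_wit_def Let_def using c PQ QP eqA
    by (intro exI[of _ P] exI[of _ Q]) (auto simp: gain_adj_matrix_def)
  then show ?thesis unfolding mat_spectrum_def using char_poly_similar by metis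
qed

lemma conj_spec:
  assumes gs: "gr_simple V G" and g: "gain_graph G \<phi>"
  shows "mat_spectrum (gain_adj_matrix n G (\<lambda>u v. cnj (\<phi> u v))) = mat_spectrum (gain_adj_matrix n G \<phi>)"
proof -
  have symG: "\<And>u v. G u v \<Longrightarrow> G v u" using gs unfolding gr_simple_def by auto
  have "gain_adj_matrix n G (\<lambda>u v. cnj (\<phi> u v)) = transpose_mat (gain_adj_matrix n G \<phi>)"
  proof (rule eq_matI)
    fix i j assume "i < dim_row (transpose_mat (gain_adj_matrix n G \<phi>))"
      "j < dim_col (transpose_mat (gain_adj_matrix n G \<phi>))"
    then have ij: "i < n" "j < n" by (auto simp: gain_adj_matrix_def)
    show "gain_adj_matrix n G (\<lambda>u v. cnj (\<phi> u v)) $$ (i, j) = transpose_mat (gain_adj_matrix n G \<phi>) $$ (i, j)"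
    proof (cases "G i j")
      case True
      have "\<phi> j i = inverse (\<phi> i j)" "cmod (\<phi> i j) = 1" using g True unfolding gain_graph_def by auto
      then have "\<phi> j i = cnj (\<phi> i j)" using unit_inv by simp
      then show ?thesis using ij True symG by (simp add: gain_adj_matrix_def)
    next
      case False
      then have "\<not> G j i" using symG by blast
      then show ?thesis using ij False by (simp add: gain_adj_matrix_def)
    qed
  qed (auto simp: gain_adj_matrix_def)
  moreover have "gain_adj_matrix n G \<phi> \<in> carrier_mat n n" by (simp add: gain_adj_matrix_def)
  ultimately show ?thesis unfolding mat_spectrum_def by simp
qed

lemma cnj_neg_angle: "cnj (exp (\<i> * complex_of_real (neg_angle x))) = exp (\<i> * complex_of_real x)"
proof -
  have "cnj (cis (neg_angle x)) = cis x"
    by (simp add: cis_cnj neg_angle_def cis.ctr cos_diff sin_diff complex_eq_iff)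
  then show ?thesis by (simp add: cis_conv_exp)
qed

lemma fcg_cnj: "fund_cycle_gain T (\<lambda>u v. cnj (\<phi> u v)) e = cnj (fund_cycle_gain T \<phi> e)"
  by (cases e) (simp add: fund_cycle_gain_def Let_def)

lemma conj_in_A:
  assumes "\<phi> \<in> A_T n G T rt (neg_angle \<circ> r)"
  shows "(\<lambda>u v. cnj (\<phi> u v)) \<in> A_T n G T rt r"
proof -
  have g: "gain_graph G \<phi>" and f: "\<forall>e \<in> nontree_edges {0..<n} G T rt.
      fund_cycle_gain T \<phi> e = exp (\<i> * complex_of_real (neg_angle (r e)))"
    using assms unfolding A_T_def by auto
  have "gain_graph G (\<lambda>u v. cnj (\<phi> u v))" using g unfolding gain_graph_def by auto
  moreover have "\<forall>e \<in> nontree_edges {0..<n} G T rt.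
      fund_cycle_gain T (\<lambda>u v. cnj (\<phi> u v)) e = exp (\<i> * complex_of_real (r e))"
    using f by (simp add: fcg_cnj cnj_neg_angle)
  ultimately show ?thesis unfolding A_T_def by auto
qed


theorem lemma3p3:
  fixes n :: nat and G T :: "nat \<Rightarrow> nat \<Rightarrow> bool" and rt :: nat and r :: "nat \<times> nat \<Rightarrow> real"
  assumes "gr_simple {0..<n} G"
    and "gr_connected {0..<n} G"
    and "normal_spanning_tree {0..<n} G T rt"
    and "\<forall>e \<in> nontree_edges {0..<n} G T rt. 0 \<le> r e \<and> r e < 2 * pi"
    and "\<exists>e \<in> nontree_edges {0..<n} G T rt. r e \<noteq> 0"
  shows "\<forall>\<phi>1 \<in> A_T n G T rt r \<union> A_T n G T rt (neg_angle \<circ> r).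
         \<forall>\<phi>2 \<in> A_T n G T rt r \<union> A_T n G T rt (neg_angle \<circ> r).
           mat_spectrum (gain_adj_matrix n G \<phi>1) = mat_spectrum (gain_adj_matrix n G \<phi>2)"
proof -
  have same: "mat_spectrum (gain_adj_matrix n G \<psi>1) = mat_spectrum (gain_adj_matrix n G \<psi>2)"
    if "\<psi>1 \<in> A_T n G T rt r" "\<psi>2 \<in> A_T n G T rt r" for \<psi>1 \<psi>2
  proof -
    have g: "gain_graph G \<psi>1" "gain_graph G \<psi>2" using that unfolding A_T_def by auto
    have "\<forall>e \<in> nontree_edges {0..<n} G T rt. fund_cycle_gain T \<psi>1 e = fund_cycle_gain T \<psi>2 e"
      using that unfolding A_T_def by auto
    from switching_edges[OF assms(1) assms(3) g this] obtain \<zeta> where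
      "\<forall>v. cmod (\<zeta> v) = 1" "\<forall>u v. G u v \<longrightarrow> \<psi>1 u v * \<zeta> u = \<psi>2 u v * \<zeta> v" by blast
    then show ?thesis using switch_spec[of \<zeta> G \<psi>1 \<psi>2 n] by blast
  qed
  have red: "\<exists>\<psi> \<in> A_T n G T rt r. mat_spectrum (gain_adj_matrix n G \<phi>) = mat_spectrum (gain_adj_matrix n G \<psi>)"
    if "\<phi> \<in> A_T n G T rt r \<union> A_T n G T rt (neg_angle \<circ> r)" for \<phi>
  proof (cases "\<phi> \<in> A_T n G T rt r")
    case True then show ?thesis by blast
  next
    case False
    then have a: "\<phi> \<in> A_T n G T rt (neg_angle \<circ> r)" using that by blast
    then have "gain_graph G \<phi>" unfolding A_T_def by auto
    then have "mat_spectrum (gain_adj_matrix n G (\<lambda>u v. cnj (\<phi> u v))) = mat_spectrum (gain_adj_matrix n G \<phi>)"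
      using conj_spec[OF assms(1)] by blast
    then show ?thesis using conj_in_A[OF a] by metis
  qed
  show ?thesis
  proof (intro ballI)
    fix \<phi>1 \<phi>2 assume "\<phi>1 \<in> A_T n G T rt r \<union> A_T n G T rt (neg_angle \<circ> r)"
      "\<phi>2 \<in> A_T n G T rt r \<union> A_T n G T rt (neg_angle \<circ> r)"
    then obtain \<psi>1 \<psi>2 where "\<psi>1 \<in> A_T n G T rt r" "\<psi>2 \<in> A_T n G T rt r"
      "mat_spectrum (gain_adj_matrix n G \<phi>1) = mat_spectrum (gain_adj_matrix n G \<psi>1)"
      "mat_spectrum (gain_adj_matrix n G \<phi>2) = mat_spectrum (gain_adj_matrix n G \<psi>2)"
      using red by metis
    then show "mat_spectrum (gain_adj_matrix n G \<phi>1) = mat_spectrum (gain_adj_matrix n G \<phi>2)"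
      using same by metis
  qed
qed

end
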